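(* Let $f(X)=X^4+2$. Assume that $|S^2(f,T)|=o(T)$ as $T\to\infty$. Then the set of $d\in\mathbb{N}$ such that $f(d)$ is square-free has a natural density, this density is positive, and it equals $\prod_p\left(1-\frac{\delta_f(p^2)}{p^2}\right)$, where $\delta_f(N)=|\{a\bmod N: f(a)\equiv 0\pmod N\}|$.
   Context: For a natural number $n$, $R_f(n):=\min\{|d|: d\in\mathbb{Z},\ n\mid f(d)\}$ if such $d$ exists, and $R_f(n)=\infty$ otherwise. For real $T$, $S^2(f,T):=\{p \text{ prime}: R_f(p^2)\le T\}$. *)

theory Defs
  imports Complex_Main "HOL-Library.Landau_Symbols" "HOL-Library.Extended_Real"
    "HOL-Computational_Algebra.Primes" "HOL-Computational_Algebra.Squarefree"
begin

definition fpoly :: "int \<Rightarrow> int" where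
  "fpoly x = x ^ 4 + 2"

text \<open>R_f(n) = min { |d| : d integer, n divides f(d) }, and infinity if no such d
  (the infimum of the empty set in ereal is infinity).\<close>
definition R_f :: "(int \<Rightarrow> int) \<Rightarrow> nat \<Rightarrow> ereal" where
  "R_f f n = (INF d \<in> {d::int. int n dvd f d}. ereal (real_of_int \<bar>d\<bar>))"

definition S2 :: "(int \<Rightarrow> int) \<Rightarrow> real \<Rightarrow> nat set" where
  "S2 f T = {p. prime p \<and> R_f f (p ^ 2) \<le> ereal T}"

definition delta_f :: "(int \<Rightarrow> int) \<Rightarrow> nat \<Rightarrow> nat" where
  "delta_f f N = card {a::int. 0 \<le> a \<and> a < int N \<and> int N dvd f a}"

end

theory Submission
  imports Defs
begin

lemma sq_le2:
  fixes p :: nat and c :: int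
  assumes p: "prime p" "odd p" and nc: "\<not> int p dvd c"
  shows "card {y::int. 0 \<le> y \<and> y < int (p^2) \<and> int (p^2) dvd y^2 - c} \<le> 2"
proof (cases "{y::int. 0 \<le> y \<and> y < int (p^2) \<and> int (p^2) dvd y^2 - c} = {}")
  case True then show ?thesis by (simp only: True card.empty)
next
  case False
  let ?M = "int (p^2)"
  from False obtain z where z: "0 \<le> z" "z < ?M" "?M dvd z^2 - c" by auto
  have pi: "prime (int p)" using p by simp
  have sub: "{y::int. 0 \<le> y \<and> y < ?M \<and> ?M dvd y^2 - c} \<subseteq> {z, (-z) mod ?M}"
  proof
    fix y assume "y \<in> {y::int. 0 \<le> y \<and> y < ?M \<and> ?M dvd y^2 - c}"
    then have y: "0 \<le> y" "y < ?M" "?M dvd y^2 - c" by auto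
    have "?M dvd (y^2 - c) - (z^2 - c)" by (rule dvd_diff[OF y(3) z(3)])
    then have d: "?M dvd (y - z) * (y + z)" by (simp add: power2_eq_square algebra_simps)
    have "\<not> (int p dvd y - z \<and> int p dvd y + z)"
    proof
      assume h: "int p dvd y - z \<and> int p dvd y + z"
      then have "int p dvd (y - z) + (y + z)" by (metis dvd_add)
      moreover have "(y - z) + (y + z) = 2 * y" by simp
      ultimately have "int p dvd 2 * y" by metis
      moreover have "\<not> int p dvd 2"
      proof
        assume "int p dvd 2"
        then have "p dvd 2" by (metis of_nat_numeral int_dvd_int_iff)
        moreover have "p \<ge> 2" using p prime_ge_2_nat by blast
        moreover have "p \<le> 2" using \<open>p dvd 2\<close> by (simp add: dvd_imp_le)
        ultimately have "p = 2" by linarith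
        with p show False by simp
      qed
      ultimately have "int p dvd y" by (metis pi prime_dvd_mult_iff)
      then have y2: "int p dvd y^2" by (metis dvd_mult2 power2_eq_square)
      have "int p dvd ?M" by (simp add: power2_eq_square)
      then have "int p dvd y^2 - c" using y(3) by (rule dvd_trans)
      then have "int p dvd y^2 - (y^2 - c)" using y2 by (rule dvd_diff[rotated])
      then show False using nc by simp
    qed
    then have "coprime (int p) (y - z) \<or> coprime (int p) (y + z)"
      by (meson pi prime_imp_coprime)
    then have "coprime ?M (y - z) \<or> coprime ?M (y + z)" by (simp add: of_nat_power)
    then have "?M dvd y + z \<or> ?M dvd y - z" using d
      by (auto simp: coprime_dvd_mult_right_iff coprime_dvd_mult_left_iff)
    then show "y \<in> {z, (-z) mod ?M}"
    proof
      assume "?M dvd y + z"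
      moreover have "y + z = y - (-z)" by simp
      ultimately have "y mod ?M = (-z) mod ?M" by (simp only: mod_eq_dvd_iff)
      then show ?thesis using y by simp
    next
      assume "?M dvd y - z"
      then have "y mod ?M = z mod ?M" by (simp add: mod_eq_dvd_iff)
      then show ?thesis using y z by simp
    qed
  qed
  have "card {y::int. 0 \<le> y \<and> y < ?M \<and> ?M dvd y^2 - c} \<le> card {z, (-z) mod ?M}"
    by (rule card_mono[OF _ sub]) simp
  also have "\<dots> \<le> 2" by (cases "z = (-z) mod ?M") auto
  finally show ?thesis .
qed

lemma odd_prime_not_dvd2:
  fixes p :: nat
  assumes p: "prime p" "odd p"
  shows "\<not> int p dvd 2"
proof
  assume "int p dvd 2"
  then have "p dvd 2" by (metis of_nat_numeral int_dvd_int_iff)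
  moreover have "p \<ge> 2" using p prime_ge_2_nat by blast
  moreover have "p \<le> 2" using \<open>p dvd 2\<close> by (simp add: dvd_imp_le)
  ultimately have "p = 2" by linarith
  with p show False by simp
qed

lemma delta_odd_le4:
  fixes p :: nat
  assumes p: "prime p" "odd p"
  shows "delta_f fpoly (p^2) \<le> 4"
proof -
  let ?M = "int (p^2)"
  have Mpos: "?M > 0" using p prime_gt_0_nat by simp
  have n2: "\<not> int p dvd 2" by (rule odd_prime_not_dvd2[OF p])
  have pM: "int p dvd ?M" by (simp add: power2_eq_square)
  define W where "W = {w::int. 0 \<le> w \<and> w < ?M \<and> ?M dvd w^2 - (-2)}"
  define A where "A = (\<lambda>w. {y::int. 0 \<le> y \<and> y < ?M \<and> ?M dvd y^2 - w})"
  have W2: "card W \<le> 2" unfolding W_def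
    by (rule sq_le2[OF p]) (use n2 in simp)
  have finW: "finite W" unfolding W_def by (rule finite_subset[of _ "{0..<?M}"]) auto
  have A2: "card (A w) \<le> 2" if "w \<in> W" for w
  proof -
    have "\<not> int p dvd w"
    proof
      assume "int p dvd w"
      then have a: "int p dvd w^2" by (metis dvd_mult2 power2_eq_square)
      have "int p dvd w^2 - (-2)" using that pM unfolding W_def by (auto intro: dvd_trans)
      then have "int p dvd w^2 - (w^2 - (-2))" using a by (rule dvd_diff[rotated])
      then show False using n2 by simp
    qed
    then show ?thesis unfolding A_def by (rule sq_le2[OF p])
  qed
  have sub: "{a::int. 0 \<le> a \<and> a < ?M \<and> ?M dvd fpoly a} \<subseteq> (\<Union>w\<in>W. A w)"
  proof
    fix y assume "y \<in> {a::int. 0 \<le> a \<and> a < ?M \<and> ?M dvd fpoly a}"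
    then have y: "0 \<le> y" "y < ?M" "?M dvd y^4 + 2" by (auto simp: fpoly_def)
    define w where "w = y^2 mod ?M"
    have w: "0 \<le> w" "w < ?M" using Mpos unfolding w_def by auto
    have "(w^2 + 2) mod ?M = ((y^2)^2 + 2) mod ?M"
      unfolding w_def by (metis mod_add_left_eq power_mod)
    also have "\<dots> = 0" using y(3) by (simp add: power_mult[symmetric])
    finally have "?M dvd w^2 - (-2)" by (simp add: dvd_eq_mod_eq_0)
    then have "w \<in> W" using w unfolding W_def by simp
    moreover have "?M dvd y^2 - w" unfolding w_def by (simp add: minus_mod_eq_mult_div)
    ultimately show "y \<in> (\<Union>w\<in>W. A w)" using y unfolding A_def by auto
  qed
  have "delta_f fpoly (p^2) \<le> card (\<Union>w\<in>W. A w)"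
    unfolding delta_f_def
    by (rule card_mono[OF _ sub]) (auto simp: A_def intro!: finite_subset[of _ "{0..<?M}"] finW)
  also have "\<dots> \<le> (\<Sum>w\<in>W. card (A w))" by (rule card_UN_le[OF finW])
  also have "\<dots> \<le> (\<Sum>w\<in>W. 2)" by (rule sum_mono) (rule A2)
  also have "\<dots> \<le> 4" using W2 by simp
  finally show ?thesis .
qed

lemma delta_2: "delta_f fpoly (2^2) = 0"
proof -
  have H: "{a::int. 0 \<le> a \<and> a < int (2^2) \<and> int (2^2) dvd fpoly a} = {}"
  proof (safe)
    fix a :: int assume h: "0 \<le> a" "a < int (2^2)" "int (2^2) dvd fpoly a"
    then have "a = 0 \<or> a = 1 \<or> a = 2 \<or> a = 3" by auto
    then show "a \<in> {}" using h(3) by (auto simp: fpoly_def)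
  qed
  show ?thesis unfolding delta_f_def by (simp only: H card.empty)
qed

lemma delta_le4: "prime p \<Longrightarrow> delta_f fpoly (p^2) \<le> 4"
proof (cases "p = 2")
  case True then show ?thesis using delta_2 by simp
next
  case False
  assume p: "prime p"
  then have "p > 2" using False prime_ge_2_nat[OF p] by linarith
  then have "odd p" using prime_odd_nat[OF p] by simp
  then show ?thesis using delta_odd_le4[OF p] by simp
qed

lemma delta_lt: "prime p \<Longrightarrow> delta_f fpoly (p^2) < p^2"
proof (cases "p = 2")
  case True then show ?thesis using delta_2 by simp
next
  case False
  assume p: "prime p"
  then have "p \<ge> 3" using False prime_ge_2_nat[OF p] by linarith
  then have "p^2 \<ge> 3^2" by (rule power_mono) simp
  then show ?thesis using delta_le4[OF p] by simp
qed


lemma periodic_shift: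
  fixes G :: "nat \<Rightarrow> bool" and M d k :: nat
  assumes per: "\<And>d. G (d + M) = G d"
  shows "G (d + k * M) = G d"
proof (induction k)
  case 0 then show ?case by simp
next
  case (Suc k)
  have "G (d + Suc k * M) = G ((d + k * M) + M)" by (simp add: algebra_simps)
  also have "\<dots> = G (d + k * M)" by (rule per)
  finally show ?case using Suc by simp
qed

lemma count_periodic:
  fixes G :: "nat \<Rightarrow> bool"
  assumes per: "\<And>d. G (d + M) = G d"
  shows "card {d \<in> {..<k * M}. G d} = k * card {d \<in> {..<M}. G d}"
proof (induction k)
  case 0 then show ?case by simp
next
  case (Suc k)
  have eq: "{d \<in> {..<Suc k * M}. G d} = {d \<in> {..<k * M}. G d} \<union> (\<lambda>d. d + k * M) ` {d \<in> {..<M}. G d}"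
  proof (rule set_eqI, rule iffI)
    fix x assume x: "x \<in> {d \<in> {..<Suc k * M}. G d}"
    show "x \<in> {d \<in> {..<k * M}. G d} \<union> (\<lambda>d. d + k * M) ` {d \<in> {..<M}. G d}"
    proof (cases "x < k * M")
      case True then show ?thesis using x by auto
    next
      case False
      then have "x = (x - k * M) + k * M" "x - k * M < M" using x by auto
      moreover have "G (x - k * M)" using x periodic_shift[of G M "x - k * M" k, OF per] \<open>x = (x - k * M) + k * M\<close> by simp
      ultimately show ?thesis by (metis (no_types, lifting) UnI2 image_eqI lessThan_iff mem_Collect_eq)
    qed
  next
    fix x assume "x \<in> {d \<in> {..<k * M}. G d} \<union> (\<lambda>d. d + k * M) ` {d \<in> {..<M}. G d}"
    then show "x \<in> {d \<in> {..<Suc k * M}. G d}"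
      using periodic_shift[of G M _ k, OF per] by auto
  qed
  have "card {d \<in> {..<Suc k * M}. G d} = card {d \<in> {..<k * M}. G d} + card ((\<lambda>d. d + k * M) ` {d \<in> {..<M}. G d})"
    unfolding eq by (rule card_Un_disjoint) auto
  also have "card ((\<lambda>d. d + k * M) ` {d \<in> {..<M}. G d}) = card {d \<in> {..<M}. G d}"
    by (rule card_image) (auto simp: inj_on_def)
  finally show ?case using Suc by simp
qed

lemma count_bounds:
  fixes G :: "nat \<Rightarrow> bool"
  assumes per: "\<And>d. G (d + M) = G d" and M: "M > 0"
  shows "(N div M) * card {d \<in> {..<M}. G d} \<le> card {d \<in> {..<N}. G d}"
    and "card {d \<in> {..<N}. G d} \<le> (N div M + 1) * card {d \<in> {..<M}. G d}"
proof -
  have "(N div M) * card {d \<in> {..<M}. G d} = card {d \<in> {..<(N div M) * M}. G d}"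
    by (rule count_periodic[of G M, OF per, symmetric])
  also have "\<dots> \<le> card {d \<in> {..<N}. G d}"
    by (rule card_mono) (auto simp: div_times_less_eq_dividend intro: less_le_trans)
  finally show "(N div M) * card {d \<in> {..<M}. G d} \<le> card {d \<in> {..<N}. G d}" .
  have lt: "N < (N div M + 1) * M"
    using M by (metis add.commute div_mult_mod_eq mod_less_divisor add_less_cancel_left distrib_right mult_1)
  have "card {d \<in> {..<N}. G d} \<le> card {d \<in> {..<(N div M + 1) * M}. G d}"
    by (rule card_mono) (use lt in auto)
  also have "\<dots> = (N div M + 1) * card {d \<in> {..<M}. G d}"
    by (rule count_periodic[of G M, OF per])
  finally show "card {d \<in> {..<N}. G d} \<le> (N div M + 1) * card {d \<in> {..<M}. G d}" .
qed

lemma count_1N: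
  fixes G :: "nat \<Rightarrow> bool"
  shows "card {d \<in> {1..N}. G d} \<le> card {d \<in> {..<N+1}. G d}"
    and "card {d \<in> {..<N}. G d} \<le> card {d \<in> {1..N}. G d} + 1"
proof -
  show "card {d \<in> {1..N}. G d} \<le> card {d \<in> {..<N+1}. G d}"
    by (rule card_mono) auto
  have "card {d \<in> {..<N}. G d} \<le> card (insert 0 {d \<in> {1..N}. G d})"
    by (rule card_mono) auto
  also have "\<dots> \<le> card {d \<in> {1..N}. G d} + 1" by (simp add: card_insert_if)
  finally show "card {d \<in> {..<N}. G d} \<le> card {d \<in> {1..N}. G d} + 1" .
qed

lemma crt_count:
  fixes m n :: nat and G H :: "nat \<Rightarrow> bool"
  assumes cop: "coprime m n" and m: "m > 0" and n: "n > 0"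
    and G: "\<And>d. G d = G (d mod m)" and H: "\<And>d. H d = H (d mod n)"
  shows "card {d \<in> {..<m * n}. G d \<and> H d} = card {d \<in> {..<m}. G d} * card {d \<in> {..<n}. H d}"
proof -
  define \<phi> where "\<phi> = (\<lambda>d::nat. (d mod m, d mod n))"
  have inj: "inj_on \<phi> {..<m * n}"
  proof (rule inj_onI)
    fix a b assume a: "a \<in> {..<m * n}" and b: "b \<in> {..<m * n}" and e: "\<phi> a = \<phi> b"
    then have "a mod m = b mod m" "a mod n = b mod n" unfolding \<phi>_def by auto
    then have "int m dvd int a - int b" "int n dvd int a - int b"
      by (metis mod_eq_dvd_iff of_nat_mod)+
    moreover have "coprime (int m) (int n)" using cop by simp
    ultimately have "int m * int n dvd int a - int b" by (simp add: divides_mult)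
    then have "int a mod (int m * int n) = int b mod (int m * int n)" by (simp add: mod_eq_dvd_iff)
    then have "int (a mod (m * n)) = int (b mod (m * n))" by (simp add: of_nat_mod)
    then have "a mod (m * n) = b mod (m * n)" by (simp only: of_nat_eq_iff)
    then show "a = b" using a b by simp
  qed
  have img: "\<phi> ` {..<m * n} = {..<m} \<times> {..<n}"
  proof (rule card_subset_eq)
    show "finite ({..<m} \<times> {..<n})" by simp
    show "\<phi> ` {..<m * n} \<subseteq> {..<m} \<times> {..<n}" unfolding \<phi>_def using m n by auto
    show "card (\<phi> ` {..<m * n}) = card ({..<m} \<times> {..<n})"
      using card_image[OF inj] by (simp add: card_cartesian_product)
  qed
  have img2: "\<phi> ` {d \<in> {..<m * n}. G d \<and> H d} = {d \<in> {..<m}. G d} \<times> {d \<in> {..<n}. H d}"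
  proof (rule set_eqI, rule iffI)
    fix x assume "x \<in> \<phi> ` {d \<in> {..<m * n}. G d \<and> H d}"
    then obtain d where "d < m * n" "G d" "H d" "x = \<phi> d" by auto
    then show "x \<in> {d \<in> {..<m}. G d} \<times> {d \<in> {..<n}. H d}"
      unfolding \<phi>_def using m n G[of d] H[of d] by auto
  next
    fix x assume x: "x \<in> {d \<in> {..<m}. G d} \<times> {d \<in> {..<n}. H d}"
    then have "x \<in> \<phi> ` {..<m * n}" using img by auto
    then obtain d where d: "d < m * n" "x = \<phi> d" by auto
    then have "G d" "H d" using x G[of d] H[of d] unfolding \<phi>_def by auto
    then show "x \<in> \<phi> ` {d \<in> {..<m * n}. G d \<and> H d}" using d by auto
  qed
  have "card {d \<in> {..<m * n}. G d \<and> H d} = card (\<phi> ` {d \<in> {..<m * n}. G d \<and> H d})"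
    by (rule card_image[symmetric]) (rule inj_on_subset[OF inj], auto)
  also have "\<dots> = card {d \<in> {..<m}. G d} * card {d \<in> {..<n}. H d}"
    unfolding img2 by (simp add: card_cartesian_product)
  finally show ?thesis .
qed


definition sqdiv :: "nat \<Rightarrow> nat \<Rightarrow> bool" where
  "sqdiv p d \<longleftrightarrow> int (p^2) dvd fpoly (int d)"

definition dl :: "nat \<Rightarrow> nat" where
  "dl p = card {d \<in> {..<p^2}. sqdiv p d}"

definition QS :: "nat set \<Rightarrow> nat" where
  "QS S = (\<Prod>p\<in>S. p^2)"

definition good :: "nat set \<Rightarrow> nat \<Rightarrow> bool" where
  "good S d \<longleftrightarrow> (\<forall>p\<in>S. \<not> sqdiv p d)"

lemma fpoly_mod: "fpoly x mod m = fpoly (x mod m) mod m"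
  unfolding fpoly_def by (metis mod_add_left_eq power_mod)

lemma dvd_fpoly_mod:
  fixes m M d :: nat
  assumes "m dvd M"
  shows "(int m dvd fpoly (int d)) = (int m dvd fpoly (int (d mod M)))"
proof -
  have "int (d mod M) mod int m = int d mod int m"
    using assms by (simp add: of_nat_mod[symmetric] mod_mod_cancel)
  then have "fpoly (int d) mod int m = fpoly (int (d mod M)) mod int m"
    by (metis fpoly_mod)
  then show ?thesis by (simp add: dvd_eq_mod_eq_0)
qed

lemma delta_nat: "delta_f fpoly m = card {d \<in> {..<m}. int m dvd fpoly (int d)}"
proof -
  have "{a::int. 0 \<le> a \<and> a < int m \<and> int m dvd fpoly a} = int ` {d \<in> {..<m}. int m dvd fpoly (int d)}"
  proof (rule set_eqI, rule iffI)
    fix a assume "a \<in> {a::int. 0 \<le> a \<and> a < int m \<and> int m dvd fpoly a}"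
    then have a: "0 \<le> a" "a < int m" "int m dvd fpoly a" by auto
    then have "a = int (nat a)" "nat a < m" "int m dvd fpoly (int (nat a))" by auto
    then show "a \<in> int ` {d \<in> {..<m}. int m dvd fpoly (int d)}" by blast
  qed auto
  then show ?thesis unfolding delta_f_def by (simp add: card_image)
qed

lemma dl_delta: "dl p = delta_f fpoly (p^2)"
  unfolding dl_def delta_nat sqdiv_def by simp

lemma dl_le: "dl p \<le> p^2"
proof -
  have "dl p \<le> card {..<p^2}" unfolding dl_def by (rule card_mono) auto
  then show ?thesis by simp
qed

lemma QS_pos: "finite S \<Longrightarrow> \<forall>p\<in>S. prime p \<Longrightarrow> QS S > 0"
  unfolding QS_def by (auto intro!: prod_pos simp: prime_gt_0_nat)

lemma good_mod: "finite S \<Longrightarrow> good S d = good S (d mod QS S)"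
proof -
  assume fin: "finite S"
  have "sqdiv p d = sqdiv p (d mod QS S)" if "p \<in> S" for p
    unfolding sqdiv_def
    by (rule dvd_fpoly_mod) (unfold QS_def, rule dvd_prodI[OF fin that])
  then show ?thesis unfolding good_def by auto
qed

lemma sqdiv_mod: "sqdiv p d = sqdiv p (d mod p^2)"
  unfolding sqdiv_def by (rule dvd_fpoly_mod) simp

lemma prod_count:
  assumes "finite S" "\<forall>p\<in>S. prime p"
  shows "card {d \<in> {..<QS S}. good S d} = (\<Prod>p\<in>S. p^2 - dl p)"
  using assms
proof (induction S rule: finite_induct)
  case empty
  then show ?case by (simp add: QS_def good_def)
next
  case (insert q S)
  have q: "prime q" using insert by simp
  have Sp: "\<forall>p\<in>S. prime p" using insert by simp
  have QSi: "QS (insert q S) = q^2 * QS S" unfolding QS_def using insert by simp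
  have cop: "coprime (q^2) (QS S)"
    unfolding QS_def
  proof (rule prod_coprime_right)
    fix p assume "p \<in> S"
    then have "p \<noteq> q" "prime p" using insert by auto
    then have "coprime q p" using q primes_coprime by blast
    then show "coprime (q^2) (p^2)" by simp
  qed
  have gi: "good (insert q S) d = ((\<not> sqdiv q d) \<and> good S d)" for d
    unfolding good_def by simp
  have "card {d \<in> {..<QS (insert q S)}. good (insert q S) d}
        = card {d \<in> {..<q^2 * QS S}. (\<not> sqdiv q d) \<and> good S d}"
    unfolding QSi gi by simp
  also have "\<dots> = card {d \<in> {..<q^2}. \<not> sqdiv q d} * card {d \<in> {..<QS S}. good S d}"
    by (rule crt_count[OF cop]) (use q QS_pos[OF insert(1) Sp] prime_gt_0_nat in
        \<open>auto simp: sqdiv_mod[symmetric] good_mod[OF insert(1), symmetric]\<close>)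
  also have "card {d \<in> {..<q^2}. \<not> sqdiv q d} = q^2 - dl q"
  proof -
    have "{d \<in> {..<q^2}. \<not> sqdiv q d} = {..<q^2} - {d \<in> {..<q^2}. sqdiv q d}" by auto
    moreover have "card ({..<q^2} - {d \<in> {..<q^2}. sqdiv q d}) = card {..<q^2} - card {d \<in> {..<q^2}. sqdiv q d}"
      by (rule card_Diff_subset) auto
    ultimately show ?thesis unfolding dl_def by simp
  qed
  also have "card {d \<in> {..<QS S}. good S d} = (\<Prod>p\<in>S. p^2 - dl p)"
    using insert Sp by simp
  finally show ?case using insert by simp
qed

definition PS :: "nat set \<Rightarrow> real" where
  "PS S = (\<Prod>p\<in>S. 1 - real (delta_f fpoly (p ^ 2)) / real (p ^ 2))"

lemma prod_count_real:
  assumes "finite S" "\<forall>p\<in>S. prime p"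
  shows "real (card {d \<in> {..<QS S}. good S d}) = real (QS S) * PS S"
proof -
  have "real (card {d \<in> {..<QS S}. good S d}) = (\<Prod>p\<in>S. real (p^2) - real (dl p))"
    using prod_count[OF assms] dl_le by (simp add: of_nat_diff)
  also have "\<dots> = (\<Prod>p\<in>S. real (p^2) * (1 - real (dl p) / real (p^2)))"
  proof (rule prod.cong[OF refl])
    fix p assume "p \<in> S"
    then have "real (p^2) > 0" using assms prime_gt_0_nat by simp
    then show "real (p^2) - real (dl p) = real (p^2) * (1 - real (dl p) / real (p^2))"
      by (simp add: field_simps)
  qed
  also have "\<dots> = real (QS S) * PS S"
    unfolding QS_def PS_def dl_delta by (simp add: prod.distrib)
  finally show ?thesis .
qed


definition aa :: "nat \<Rightarrow> real" where
  "aa p = real (delta_f fpoly (p ^ 2)) / real (p ^ 2)"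

lemma PS_aa: "PS S = (\<Prod>p\<in>S. 1 - aa p)"
  unfolding PS_def aa_def by simp

lemma aa_nonneg: "aa p \<ge> 0"
  unfolding aa_def by simp

lemma aa_lt1: "prime p \<Longrightarrow> aa p < 1"
proof -
  assume p: "prime p"
  have "real (p^2) > 0" using p prime_gt_0_nat by simp
  moreover have "real (delta_f fpoly (p ^ 2)) < real (p^2)" using delta_lt[OF p] by linarith
  ultimately show ?thesis unfolding aa_def by simp
qed

lemma aa_le: "prime p \<Longrightarrow> aa p \<le> 4 / real p ^ 2"
proof -
  assume p: "prime p"
  have "real (p^2) > 0" using p prime_gt_0_nat by simp
  moreover have "real (delta_f fpoly (p ^ 2)) \<le> 4" using delta_le4[OF p] by linarith
  ultimately show ?thesis unfolding aa_def by (simp add: divide_right_mono)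
qed

lemma PS_nonneg: "\<forall>p\<in>S. prime p \<Longrightarrow> PS S \<ge> 0"
  unfolding PS_aa by (rule prod_nonneg) (use aa_lt1 in \<open>auto simp: less_imp_le\<close>)

lemma PS_pos: "\<forall>p\<in>S. prime p \<Longrightarrow> PS S > 0"
  unfolding PS_aa by (rule prod_pos) (use aa_lt1 in auto)

lemma PS_le1: "\<forall>p\<in>S. prime p \<Longrightarrow> PS S \<le> 1"
  unfolding PS_aa by (rule prod_le_1) (use aa_lt1 aa_nonneg in \<open>auto simp: less_imp_le\<close>)

lemma PS_split: "finite S' \<Longrightarrow> S \<subseteq> S' \<Longrightarrow> PS S' = PS S * PS (S' - S)"
  unfolding PS_aa by (metis prod.subset_diff mult.commute)

lemma PS_anti: "finite S' \<Longrightarrow> S \<subseteq> S' \<Longrightarrow> \<forall>p\<in>S'. prime p \<Longrightarrow> PS S' \<le> PS S"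
proof -
  assume a: "finite S'" "S \<subseteq> S'" "\<forall>p\<in>S'. prime p"
  have "PS S' = PS S * PS (S' - S)" by (rule PS_split[OF a(1,2)])
  also have "\<dots> \<le> PS S * 1"
    by (rule mult_left_mono) (use a in \<open>auto intro!: PS_le1 PS_nonneg\<close>)
  finally show ?thesis by simp
qed

lemma weierstrass:
  fixes b :: "nat \<Rightarrow> real"
  assumes "finite A" "\<forall>i\<in>A. 0 \<le> b i \<and> b i \<le> 1"
  shows "(\<Prod>i\<in>A. 1 - b i) \<ge> 1 - (\<Sum>i\<in>A. b i)"
  using assms
proof (induction A rule: finite_induct)
  case empty then show ?case by simp
next
  case (insert x A)
  have IH: "(\<Prod>i\<in>A. 1 - b i) \<ge> 1 - (\<Sum>i\<in>A. b i)" using insert by simp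
  have bx: "0 \<le> b x" "b x \<le> 1" using insert by auto
  have s: "(\<Sum>i\<in>A. b i) \<ge> 0" using insert by (auto intro: sum_nonneg)
  have "(1 - b x) * (1 - (\<Sum>i\<in>A. b i)) \<le> (1 - b x) * (\<Prod>i\<in>A. 1 - b i)"
    by (rule mult_left_mono[OF IH]) (use bx in simp)
  moreover have "1 - (b x + (\<Sum>i\<in>A. b i)) \<le> (1 - b x) * (1 - (\<Sum>i\<in>A. b i))"
    using bx s by (simp add: algebra_simps)
  ultimately show ?case using insert by simp
qed

lemma tail_interval:
  fixes a b :: nat
  assumes "1 \<le> a" "a \<le> b"
  shows "(\<Sum>n\<in>{a<..b}. 1 / real n ^ 2) \<le> 1 / real a - 1 / real b"
  using assms(2)
proof (induction b rule: dec_induct)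
  case base then show ?case by simp
next
  case (step b)
  have b1: "real b \<ge> 1" using step assms by simp
  have "{a<..Suc b} = insert (Suc b) {a<..b}" using step by auto
  then have "(\<Sum>n\<in>{a<..Suc b}. 1 / real n ^ 2) = 1 / real (Suc b) ^ 2 + (\<Sum>n\<in>{a<..b}. 1 / real n ^ 2)"
    by simp
  also have "\<dots> \<le> 1 / real (Suc b) ^ 2 + (1 / real a - 1 / real b)"
    using step by simp
  also have "1 / real (Suc b) ^ 2 \<le> 1 / real b - 1 / real (Suc b)"
  proof -
    have e: "1 / real b - 1 / real (Suc b) = 1 / (real b * real (Suc b))" using b1 by (simp add: field_simps)
    have "real b * real (Suc b) \<le> real (Suc b)^2" by (simp add: power2_eq_square)
    then have "1 / real (Suc b)^2 \<le> 1 / (real b * real (Suc b))"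
      by (rule divide_left_mono) (use b1 in auto)
    then show ?thesis using e by simp
  qed
  finally show ?case by simp
qed

lemma tail_sum:
  fixes a :: nat and A :: "nat set"
  assumes "1 \<le> a" "finite A" "\<forall>n\<in>A. a < n"
  shows "(\<Sum>n\<in>A. 1 / real n ^ 2) \<le> 1 / real a"
proof -
  define b where "b = Max (insert a A)"
  have ab: "a \<le> b" unfolding b_def using assms by simp
  have sub: "A \<subseteq> {a<..b}" unfolding b_def using assms by auto
  have "(\<Sum>n\<in>A. 1 / real n ^ 2) \<le> (\<Sum>n\<in>{a<..b}. 1 / real n ^ 2)"
    by (rule sum_mono2[OF _ sub]) auto
  also have "\<dots> \<le> 1 / real a - 1 / real b" by (rule tail_interval[OF assms(1) ab])
  also have "\<dots> \<le> 1 / real a" by simp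
  finally show ?thesis .
qed

definition Pr :: "nat \<Rightarrow> real" where
  "Pr x = PS {p. prime p \<and> p \<le> x}"

lemma Pr_dec: "decseq Pr"
  unfolding decseq_def Pr_def by (auto intro!: PS_anti)

lemma Pr_nonneg: "Pr x \<ge> 0"
  unfolding Pr_def by (rule PS_nonneg) simp

lemma Pr_lower: "x \<ge> 8 \<Longrightarrow> Pr x \<ge> Pr 8 / 2"
proof -
  assume x: "x \<ge> 8"
  let ?S = "{p. prime p \<and> p \<le> x}" and ?S8 = "{p. prime p \<and> p \<le> (8::nat)}"
  have fin: "finite ?S" by simp
  have sub: "?S8 \<subseteq> ?S" using x by auto
  have "Pr x = Pr 8 * PS (?S - ?S8)" unfolding Pr_def by (rule PS_split[OF fin sub])
  moreover have "PS (?S - ?S8) \<ge> 1 / 2"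
  proof -
    have "PS (?S - ?S8) \<ge> 1 - (\<Sum>p\<in>?S - ?S8. aa p)"
      unfolding PS_aa by (rule weierstrass) (use aa_nonneg aa_lt1 in \<open>auto simp: less_imp_le\<close>)
    moreover have "(\<Sum>p\<in>?S - ?S8. aa p) \<le> (\<Sum>p\<in>?S - ?S8. 4 * (1 / real p ^ 2))"
      by (rule sum_mono) (use aa_le in auto)
    moreover have "(\<Sum>p\<in>?S - ?S8. 4 * (1 / real p ^ 2)) = 4 * (\<Sum>p\<in>?S - ?S8. 1 / real p ^ 2)"
      by (rule sum_distrib_left[symmetric])
    moreover have "(\<Sum>p\<in>?S - ?S8. 1 / real p ^ 2) \<le> 1 / real (8::nat)"
      by (rule tail_sum) auto
    ultimately show ?thesis by linarith
  qed
  moreover have "Pr 8 \<ge> 0" by (rule Pr_nonneg)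
  ultimately have "Pr 8 * (1/2) \<le> Pr x" by (metis mult_left_mono)
  then show ?thesis by simp
qed

lemma Pr_8_pos: "Pr 8 > 0"
  unfolding Pr_def by (rule PS_pos) simp

lemma Pr_conv: "\<exists>c. Pr \<longlonglongrightarrow> c \<and> c > 0 \<and> (\<forall>x. c \<le> Pr x)"
proof -
  obtain c where c: "Pr \<longlonglongrightarrow> c" "\<forall>i. c \<le> Pr i"
    using decseq_convergent[OF Pr_dec, of 0] Pr_nonneg by blast
  have "Pr 8 / 2 \<le> c"
    by (rule LIMSEQ_le_const[OF c(1)]) (use Pr_lower in blast)
  then have "c > 0" using Pr_8_pos by simp
  then show ?thesis using c by blast
qed


lemma div_real_le: "(M::nat) > 0 \<Longrightarrow> real (N div M) \<le> real N / real M"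
proof -
  assume M: "M > 0"
  have "N div M * M \<le> N" by (simp add: div_times_less_eq_dividend)
  then have "real (N div M * M) \<le> real N" by (simp only: of_nat_le_iff)
  then have "real (N div M) * real M \<le> real N" by simp
  then show ?thesis using M by (simp add: field_simps)
qed

lemma div_real_ge: "(M::nat) > 0 \<Longrightarrow> real (N div M) \<ge> real N / real M - 1"
proof -
  assume M: "M > 0"
  have "N < (N div M + 1) * M"
    using M by (metis add.commute div_mult_mod_eq mod_less_divisor add_less_cancel_left distrib_right mult_1)
  then have "real N \<le> real ((N div M + 1) * M)" by (simp only: of_nat_le_iff less_imp_le)
  then have "real N \<le> (real (N div M) + 1) * real M" by (simp add: algebra_simps)
  then show ?thesis using M by (simp add: field_simps)
qed

lemma fpoly_pos: "fpoly x > 0"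
proof -
  have "0 \<le> x ^ 4" by (rule zero_le_even_power) simp
  then show ?thesis unfolding fpoly_def by linarith
qed

lemma S2_finite: "finite (S2 fpoly T)"
proof -
  have "S2 fpoly T \<subseteq> {p. real p \<le> (\<bar>T\<bar> + 1) ^ 4 + 2}"
  proof
    fix p assume "p \<in> S2 fpoly T"
    then have "R_f fpoly (p^2) \<le> ereal T" unfolding S2_def by auto
    also have "\<dots> < ereal (\<bar>T\<bar> + 1)" by simp
    finally obtain d where d: "int (p^2) dvd fpoly d" "ereal (real_of_int \<bar>d\<bar>) < ereal (\<bar>T\<bar> + 1)"
      unfolding R_f_def INF_less_iff by auto
    have "int (p^2) \<le> fpoly d" by (rule zdvd_imp_le[OF d(1) fpoly_pos])
    then have "real_of_int (int (p^2)) \<le> real_of_int (fpoly d)" by (simp only: of_int_le_iff)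
    then have "real (p^2) \<le> real_of_int (fpoly d)" by simp
    also have "\<dots> = real_of_int \<bar>d\<bar> ^ 4 + 2" unfolding fpoly_def by simp
    also have "\<dots> \<le> (\<bar>T\<bar> + 1) ^ 4 + 2"
    proof -
      have l: "real_of_int \<bar>d\<bar> \<le> \<bar>T\<bar> + 1" using d(2) by simp
      have "real_of_int \<bar>d\<bar> ^ 4 \<le> (\<bar>T\<bar> + 1) ^ 4" by (rule power_mono[OF l]) simp
      then show ?thesis by simp
    qed
    finally have h1: "real (p^2) \<le> (\<bar>T\<bar> + 1) ^ 4 + 2" .
    have "p \<le> p^2" by (simp add: power2_eq_square le_square)
    then have "real p \<le> real (p^2)" by (simp only: of_nat_le_iff)
    with h1 have "real p \<le> (\<bar>T\<bar> + 1) ^ 4 + 2" by linarith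
    then show "p \<in> {p. real p \<le> (\<bar>T\<bar> + 1) ^ 4 + 2}" by simp
  qed
  moreover have "finite {p::nat. real p \<le> (\<bar>T\<bar> + 1) ^ 4 + 2}"
  proof (rule finite_subset[of _ "{..nat \<lceil>(\<bar>T\<bar> + 1) ^ 4 + 2\<rceil>}"])
    show "{p::nat. real p \<le> (\<bar>T\<bar> + 1) ^ 4 + 2} \<subseteq> {..nat \<lceil>(\<bar>T\<bar> + 1) ^ 4 + 2\<rceil>}"
    proof
      fix p assume "p \<in> {p::nat. real p \<le> (\<bar>T\<bar> + 1) ^ 4 + 2}"
      then have "real p \<le> (\<bar>T\<bar> + 1) ^ 4 + 2" by simp
      then have "real p \<le> real_of_int \<lceil>(\<bar>T\<bar> + 1) ^ 4 + 2\<rceil>" by (meson le_of_int_ceiling order_trans)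
      then have "int p \<le> \<lceil>(\<bar>T\<bar> + 1) ^ 4 + 2\<rceil>" by linarith
      then show "p \<in> {..nat \<lceil>(\<bar>T\<bar> + 1) ^ 4 + 2\<rceil>}" by (simp add: le_nat_iff)
    qed
  qed simp
  ultimately show ?thesis by (rule finite_subset)
qed

lemma in_S2: "sqdiv p d \<Longrightarrow> prime p \<Longrightarrow> d \<le> N \<Longrightarrow> p \<in> S2 fpoly (real N)"
proof -
  assume a: "sqdiv p d" "prime p" "d \<le> N"
  have "R_f fpoly (p^2) \<le> ereal (real_of_int \<bar>int d\<bar>)"
    unfolding R_f_def by (rule INF_lower) (use a(1) in \<open>simp add: sqdiv_def\<close>)
  also have "\<dots> \<le> ereal (real N)" using a(3) by simp
  finally show ?thesis unfolding S2_def using a(2) by simp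
qed

lemma sqf_good: "squarefree (fpoly (int d)) \<Longrightarrow> \<forall>p\<in>S. prime p \<Longrightarrow> good S d"
proof -
  assume sq: "squarefree (fpoly (int d))" and Sp: "\<forall>p\<in>S. prime p"
  have ne: "fpoly (int d) \<noteq> 0" using fpoly_pos[of "int d"] by simp
  show ?thesis unfolding good_def sqdiv_def
  proof
    fix p assume pS: "p \<in> S"
    show "\<not> int (p^2) dvd fpoly (int d)"
    proof
      assume h: "int (p^2) dvd fpoly (int d)"
      have "prime (int p)" using Sp pS by simp
      then have "\<not> (int p)^2 dvd fpoly (int d)" using sq squarefree_factorial_semiring[OF ne] by blast
      with h show False by simp
    qed
  qed
qed


definition SP :: "nat \<Rightarrow> nat set" where "SP x = {p. prime p \<and> p \<le> x}"
definition CC :: "nat \<Rightarrow> nat" where "CC x = card {d \<in> {..<QS (SP x)}. good (SP x) d}"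
definition Aset :: "nat \<Rightarrow> nat set" where "Aset N = {d \<in> {1..N}. squarefree (fpoly (int d))}"
definition Eset :: "nat \<Rightarrow> nat \<Rightarrow> nat set" where "Eset N p = {d \<in> {1..N}. sqdiv p d}"

lemma SP_fin: "finite (SP x)" and SP_prime: "\<forall>p\<in>SP x. prime p"
  unfolding SP_def by auto

lemma QS_SP_pos: "QS (SP x) > 0"
  by (rule QS_pos[OF SP_fin SP_prime])

lemma CC_eq: "real (CC x) = real (QS (SP x)) * Pr x"
  unfolding CC_def Pr_def SP_def[symmetric] by (rule prod_count_real[OF SP_fin SP_prime])

lemma Pr_le1: "Pr x \<le> 1"
  unfolding Pr_def by (rule PS_le1) simp

lemma good_per: "finite S \<Longrightarrow> good S (d + QS S) = good S d"
  by (metis good_mod mod_add_self2)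

lemma sqdiv_per: "sqdiv p (d + p^2) = sqdiv p d"
  by (metis sqdiv_mod mod_add_self2)

lemma upper_bound: "real (card (Aset N)) \<le> real N * Pr x + real (CC x) + 1"
proof -
  let ?S = "SP x" and ?Q = "QS (SP x)"
  have "card (Aset N) \<le> card {d \<in> {1..N}. good ?S d}"
    unfolding Aset_def by (rule card_mono) (auto intro: sqf_good[OF _ SP_prime])
  also have "\<dots> \<le> card {d \<in> {..<N+1}. good ?S d}" by (rule count_1N(1))
  also have "\<dots> \<le> ((N+1) div ?Q + 1) * CC x"
    unfolding CC_def by (rule count_bounds(2)[of "good ?S" ?Q, OF good_per[OF SP_fin] QS_SP_pos])
  finally have "real (card (Aset N)) \<le> real (((N+1) div ?Q + 1) * CC x)" by (simp only: of_nat_le_iff)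
  also have "\<dots> = (real ((N+1) div ?Q) + 1) * real (CC x)" by (simp add: algebra_simps)
  also have "\<dots> \<le> (real (N+1) / real ?Q + 1) * real (CC x)"
    by (rule mult_right_mono) (use div_real_le[of "QS (SP x)" "N+1"] QS_SP_pos[of x] in auto)
  also have "\<dots> = real (N+1) * Pr x + real (CC x)"
    using QS_SP_pos[of x] unfolding CC_eq by (simp add: field_simps)
  also have "\<dots> \<le> real N * Pr x + real (CC x) + 1"
    using Pr_le1[of x] by (simp add: algebra_simps)
  finally show ?thesis .
qed

lemma E_bound: "real (card (Eset N p)) \<le> (real (N+1) / real (p^2) + 1) * 4" if p: "prime p"
proof -
  have pp: "p^2 > 0" using p prime_gt_0_nat by simp
  have "card (Eset N p) \<le> card {d \<in> {..<N+1}. sqdiv p d}" unfolding Eset_def by (rule count_1N(1))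
  also have "\<dots> \<le> ((N+1) div p^2 + 1) * dl p"
    unfolding dl_def by (rule count_bounds(2)[of "sqdiv p" "p^2", OF sqdiv_per pp])
  finally have "real (card (Eset N p)) \<le> real (((N+1) div p^2 + 1) * dl p)" by (simp only: of_nat_le_iff)
  also have "\<dots> = (real ((N+1) div p^2) + 1) * real (dl p)" by (simp add: algebra_simps)
  also have "\<dots> \<le> (real (N+1) / real (p^2) + 1) * 4"
  proof (rule mult_mono)
    show "real ((N+1) div p^2) + 1 \<le> real (N+1) / real (p^2) + 1" using div_real_le[of "p^2" "N+1"] pp by simp
    show "real (dl p) \<le> 4" using delta_le4[OF p] unfolding dl_delta by simp
  qed auto
  finally show ?thesis .
qed

lemma fpoly_mono: "d \<le> N \<Longrightarrow> fpoly (int d) \<le> fpoly (int N)"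
  unfolding fpoly_def by (simp add: power_mono)

lemma T_cover:
  assumes g: "good (SP x) d" and dN: "d \<in> {1..N}" and nsq: "\<not> squarefree (fpoly (int d))"
  shows "\<exists>p. prime p \<and> x < p \<and> p \<le> nat (fpoly (int N)) \<and> sqdiv p d"
proof -
  have ne: "fpoly (int d) \<noteq> 0" using fpoly_pos[of "int d"] by simp
  obtain q :: int where q: "prime q" "q^2 dvd fpoly (int d)"
    using nsq squarefree_factorial_semiring[OF ne] by blast
  define p where "p = nat q"
  have qp: "q = int p" unfolding p_def using prime_gt_0_int[OF q(1)] by simp
  have pp: "prime p" unfolding p_def using q(1) by simp
  have sd: "sqdiv p d" unfolding sqdiv_def using q(2) qp by simp
  have "\<not> p \<le> x"
  proof
    assume "p \<le> x"
    then have "p \<in> SP x" using pp unfolding SP_def by simp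
    then show False using g sd unfolding good_def by blast
  qed
  then have xp: "x < p" by simp
  have "int (p^2) \<le> fpoly (int d)" using sd fpoly_pos unfolding sqdiv_def by (simp add: zdvd_imp_le)
  also have "\<dots> \<le> fpoly (int N)" using dN by (simp add: fpoly_mono)
  finally have h: "int (p^2) \<le> fpoly (int N)" .
  have "p \<le> p^2" by (simp add: power2_eq_square le_square)
  then have "int p \<le> fpoly (int N)" using h by linarith
  then have "p \<le> nat (fpoly (int N))" by (simp add: le_nat_iff)
  then show ?thesis using pp xp sd by blast
qed

lemma lower_bound:
  assumes x1: "x \<ge> 1"
  shows "real N * Pr x - real (CC x) - 1 \<le> real (card (Aset N)) + 12 * real N / real x + 8 * real (card (S2 fpoly (real N)))"
proof -
  let ?S = "SP x" and ?Q = "QS (SP x)" and ?L = "nat (fpoly (int N))"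
  define T where "T = {p. prime p \<and> x < p \<and> p \<le> ?L}"
  have finT: "finite T" unfolding T_def by (rule finite_subset[of _ "{..?L}"]) auto
  define T1 where "T1 = {p \<in> T. p^2 \<le> N}"
  define T2 where "T2 = {p \<in> T. \<not> p^2 \<le> N}"
  have finT1: "finite T1" and finT2: "finite T2" using finT unfolding T1_def T2_def by auto
  have TU: "T = T1 \<union> T2" and Tdisj: "T1 \<inter> T2 = {}" unfolding T1_def T2_def by auto
  have a1: "(N div ?Q) * CC x \<le> card {d \<in> {..<N}. good ?S d}"
    unfolding CC_def by (rule count_bounds(1)[of "good ?S" ?Q, OF good_per[OF SP_fin] QS_SP_pos])
  have a2: "real N * Pr x - real (CC x) \<le> real (N div ?Q) * real (CC x)"
  proof -
    have "real N * Pr x - real (CC x) = (real N / real ?Q - 1) * real (CC x)"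
      using QS_SP_pos[of x] unfolding CC_eq by (simp add: field_simps)
    also have "\<dots> \<le> real (N div ?Q) * real (CC x)"
      by (rule mult_right_mono) (use div_real_ge[of ?Q N] QS_SP_pos[of x] in auto)
    finally show ?thesis .
  qed
  have b: "card {d \<in> {..<N}. good ?S d} \<le> card {d \<in> {1..N}. good ?S d} + 1" by (rule count_1N(2))
  have csub: "{d \<in> {1..N}. good ?S d} \<subseteq> Aset N \<union> (\<Union>p\<in>T. Eset N p)"
  proof
    fix d assume d: "d \<in> {d \<in> {1..N}. good ?S d}"
    show "d \<in> Aset N \<union> (\<Union>p\<in>T. Eset N p)"
    proof (cases "squarefree (fpoly (int d))")
      case True then show ?thesis using d unfolding Aset_def by auto
    next
      case False
      then obtain p where "prime p" "x < p" "p \<le> ?L" "sqdiv p d" using T_cover[of x d N] d by auto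
      then show ?thesis using d unfolding T_def Eset_def by auto
    qed
  qed
  have c: "card {d \<in> {1..N}. good ?S d} \<le> card (Aset N) + (\<Sum>p\<in>T. card (Eset N p))"
  proof -
    have "card {d \<in> {1..N}. good ?S d} \<le> card (Aset N \<union> (\<Union>p\<in>T. Eset N p))"
      by (rule card_mono[OF _ csub]) (auto simp: Aset_def Eset_def finT)
    also have "\<dots> \<le> card (Aset N) + card (\<Union>p\<in>T. Eset N p)" by (rule card_Un_le)
    also have "card (\<Union>p\<in>T. Eset N p) \<le> (\<Sum>p\<in>T. card (Eset N p))" by (rule card_UN_le[OF finT])
    finally show ?thesis by simp
  qed
  have d1: "(\<Sum>p\<in>T1. real (card (Eset N p))) \<le> 12 * real N / real x"
  proof -
    have "(\<Sum>p\<in>T1. real (card (Eset N p))) \<le> (\<Sum>p\<in>T1. 12 * real N * (1 / real p ^ 2))"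
    proof (rule sum_mono)
      fix p assume "p \<in> T1"
      then have p: "prime p" "p^2 \<le> N" unfolding T1_def T_def by auto
      define r where "r = real (p^2)"
      have r0: "r > 0" unfolding r_def using p prime_gt_0_nat by simp
      have rN: "r \<le> real N" unfolding r_def using p(2) by linarith
      have N1: "real N \<ge> 1" using rN r0 p(2) prime_gt_0_nat[OF p(1)]
        by (metis One_nat_def Suc_leI le_trans of_nat_1 of_nat_le_iff zero_less_power)
      have "real (card (Eset N p)) \<le> (real (N+1) / r + 1) * 4" unfolding r_def by (rule E_bound[OF p(1)])
      also have "\<dots> = (4 * (real N + 1) + 4 * r) / r" using r0 by (simp add: field_simps)
      also have "\<dots> \<le> (12 * real N) / r"
      proof -
        have "4 * (real N + 1) + 4 * r \<le> 12 * real N" using rN N1 by (smt (verit))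
        then show ?thesis by (rule divide_right_mono) (use r0 in linarith)
      qed
      also have "\<dots> = 12 * real N * (1 / real p ^ 2)" unfolding r_def by simp
      finally show "real (card (Eset N p)) \<le> 12 * real N * (1 / real p ^ 2)" .
    qed
    also have "\<dots> = 12 * real N * (\<Sum>p\<in>T1. 1 / real p ^ 2)" by (rule sum_distrib_left[symmetric])
    also have "\<dots> \<le> 12 * real N * (1 / real x)"
      by (rule mult_left_mono, rule tail_sum[OF x1 finT1]) (auto simp: T1_def T_def)
    finally show ?thesis by simp
  qed
  have d2: "(\<Sum>p\<in>T2. real (card (Eset N p))) \<le> 8 * real (card (S2 fpoly (real N)))"
  proof -
    have "(\<Sum>p\<in>T2. real (card (Eset N p))) \<le> (\<Sum>p\<in>T2. if p \<in> S2 fpoly (real N) then 8 else 0)"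
    proof (rule sum_mono)
      fix p assume "p \<in> T2"
      then have p: "prime p" "N < p^2" unfolding T2_def T_def by auto
      show "real (card (Eset N p)) \<le> (if p \<in> S2 fpoly (real N) then 8 else 0)"
      proof (cases "p \<in> S2 fpoly (real N)")
        case True
        define r where "r = real (p^2)"
        have r0: "r > 0" unfolding r_def using p prime_gt_0_nat by simp
        have rN: "real N + 1 \<le> r" unfolding r_def using p(2) by linarith
        have "real (card (Eset N p)) \<le> (real (N+1) / r + 1) * 4" unfolding r_def by (rule E_bound[OF p(1)])
        also have "\<dots> \<le> (1 + 1) * 4"
        proof -
          have "real (N+1) / r \<le> 1" using rN r0 by (simp add: divide_le_eq_1)
          then show ?thesis by (smt (verit))
        qed
        finally show ?thesis using True by simp
      next
        case False
        have "Eset N p = {}"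
        proof (rule ccontr)
          assume "Eset N p \<noteq> {}"
          then obtain d where "d \<in> Eset N p" by blast
          then have "sqdiv p d" "d \<le> N" unfolding Eset_def by auto
          then have "p \<in> S2 fpoly (real N)" using in_S2 p(1) by blast
          then show False using False by simp
        qed
        then show ?thesis using False by simp
      qed
    qed
    also have "\<dots> = (\<Sum>p\<in>{p \<in> T2. p \<in> S2 fpoly (real N)}. 8)"
      by (rule sum.inter_filter[OF finT2, symmetric])
    also have "\<dots> = 8 * real (card {p \<in> T2. p \<in> S2 fpoly (real N)})" by simp
    also have "\<dots> \<le> 8 * real (card (S2 fpoly (real N)))"
      using card_mono[OF S2_finite, of "{p \<in> T2. p \<in> S2 fpoly (real N)}" "real N"] by auto
    finally show ?thesis .
  qed
  have dsum: "real (\<Sum>p\<in>T. card (Eset N p)) \<le> 12 * real N / real x + 8 * real (card (S2 fpoly (real N)))"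
  proof -
    have "real (\<Sum>p\<in>T. card (Eset N p)) = (\<Sum>p\<in>T. real (card (Eset N p)))" by simp
    also have "\<dots> = (\<Sum>p\<in>T1. real (card (Eset N p))) + (\<Sum>p\<in>T2. real (card (Eset N p)))"
      unfolding TU by (rule sum.union_disjoint[OF finT1 finT2 Tdisj])
    finally show ?thesis using d1 d2 by linarith
  qed
  have "real (N div ?Q) * real (CC x) \<le> real (card {d \<in> {..<N}. good ?S d})"
    using a1 by (metis of_nat_le_iff of_nat_mult)
  moreover have "real (card {d \<in> {..<N}. good ?S d}) \<le> real (card {d \<in> {1..N}. good ?S d}) + 1"
    using b by linarith
  moreover have "real (card {d \<in> {1..N}. good ?S d}) \<le> real (card (Aset N)) + real (\<Sum>p\<in>T. card (Eset N p))"
    using c by linarith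
  ultimately show ?thesis using a2 dsum by linarith
qed


lemma S2_small:
  assumes "(\<lambda>T::real. real (card (S2 fpoly T))) \<in> o(\<lambda>T. T)" and e: "e > 0"
  shows "\<exists>n. \<forall>N\<ge>n. real (card (S2 fpoly (real N))) \<le> e * real N"
proof -
  have ev: "eventually (\<lambda>T. norm (real (card (S2 fpoly T))) \<le> e * norm T) at_top"
    by (rule landau_o.smallD[OF assms(1) e])
  have "eventually (\<lambda>N. norm (real (card (S2 fpoly (real N)))) \<le> e * norm (real N)) sequentially"
    using filterlim_iff[THEN iffD1, OF filterlim_real_sequentially, rule_format, OF ev] by simp
  then show ?thesis unfolding eventually_sequentially by simp
qed

lemma main_limit:
  assumes hyp: "(\<lambda>T::real. real (card (S2 fpoly T))) \<in> o(\<lambda>T. T)"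
    and c: "Pr \<longlonglongrightarrow> c" "\<forall>x. c \<le> Pr x"
  shows "(\<lambda>N. real (card (Aset N)) / real N) \<longlonglongrightarrow> c"
proof (rule LIMSEQ_I)
  fix r :: real assume r: "r > 0"
  define e where "e = r / 4"
  have e: "e > 0" unfolding e_def using r by simp
  obtain n1 where n1: "\<forall>n\<ge>n1. norm (Pr n - c) < e" using LIMSEQ_D[OF c(1) e] by blast
  define x where "x = max n1 (nat \<lceil>12 / e\<rceil> + 1)"
  have xn1: "x \<ge> n1" unfolding x_def by simp
  have x1: "x \<ge> 1" unfolding x_def by simp
  have "real x \<ge> real (nat \<lceil>12 / e\<rceil>) + 1" unfolding x_def by simp
  moreover have "real (nat \<lceil>12 / e\<rceil>) \<ge> 12 / e" by linarith
  ultimately have "real x > 12 / e" by linarith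
  then have "12 < e * real x" using e by (simp add: field_simps)
  then have x12: "12 / real x < e" using x1 by (simp add: field_simps)
  have "norm (Pr x - c) < e" using n1 xn1 by blast
  then have Prx: "Pr x < c + e" by (simp add: abs_less_iff)
  obtain n2 where n2: "\<forall>N\<ge>n2. real (card (S2 fpoly (real N))) \<le> (e / 8) * real N"
    using S2_small[OF hyp, of "e / 8"] e by auto
  define K where "K = real (CC x) + 1"
  have K0: "K > 0" unfolding K_def by simp
  define n3 where "n3 = nat \<lceil>K / e\<rceil> + 1"
  define n0 where "n0 = max n2 n3"
  show "\<exists>no. \<forall>n\<ge>no. norm (real (card (Aset n)) / real n - c) < r"
  proof (intro exI allI impI)
    fix N assume N: "N \<ge> n0"
    have Nn2: "N \<ge> n2" and Nn3: "N \<ge> n3" using N unfolding n0_def by auto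
    have "real N \<ge> real (nat \<lceil>K / e\<rceil>) + 1" using Nn3 unfolding n3_def by simp
    moreover have "real (nat \<lceil>K / e\<rceil>) \<ge> K / e" by linarith
    ultimately have "real N > K / e" by linarith
    then have KN: "K < e * real N" using e by (simp add: field_simps)
    have "N \<noteq> 0" using KN K0 by (cases "N = 0") auto
    then have Npos: "real N > 0" by simp
    have "real (card (S2 fpoly (real N))) \<le> (e / 8) * real N" using n2 Nn2 by blast
    from mult_left_mono[OF this, of 8]
    have S: "8 * real (card (S2 fpoly (real N))) \<le> e * real N" by simp
    have up: "real (card (Aset N)) \<le> real N * Pr x + K" using upper_bound[of N x] unfolding K_def by simp
    have lo: "real N * Pr x - K \<le> real (card (Aset N)) + 12 * real N / real x + 8 * real (card (S2 fpoly (real N)))"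
      using lower_bound[OF x1, of N] unfolding K_def by simp
    have "real N * Pr x \<le> real N * (c + e)" using Prx Npos by simp
    then have h1: "real N * Pr x \<le> real N * c + e * real N" by (simp add: algebra_simps)
    have h2: "real N * c \<le> real N * Pr x" using c(2) Npos by simp
    have h3: "12 * real N / real x \<le> e * real N"
    proof -
      have "12 * real N / real x = real N * (12 / real x)" by simp
      also have "\<dots> \<le> real N * e" using x12 Npos by (intro mult_left_mono) auto
      finally show ?thesis by (metis mult.commute)
    qed
    have A1': "real (card (Aset N)) < real N * c + 2 * (e * real N)"
      using up h1 KN by linarith
    have A2': "real (card (Aset N)) > real N * c - 3 * (e * real N)"
      using lo h2 h3 KN S by linarith
    have A1: "real (card (Aset N)) < real N * (c + 2 * e)"
      using A1' by (simp add: algebra_simps)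
    have A2: "real (card (Aset N)) > real N * (c - 3 * e)"
      using A2' by (simp add: algebra_simps)
    have "real (card (Aset N)) / real N < c + 2 * e" using A1 Npos by (simp add: divide_less_eq mult.commute)
    moreover have "real (card (Aset N)) / real N > c - 3 * e" using A2 Npos by (simp add: less_divide_eq mult.commute)
    ultimately have "real (card (Aset N)) / real N - c < r" "c - real (card (Aset N)) / real N < r"
      unfolding e_def using r by linarith+
    then show "norm (real (card (Aset N)) / real N - c) < r" by (simp add: abs_less_iff)
  qed
qed

theorem theorem3:
  assumes "(\<lambda>T::real. real (card (S2 fpoly T))) \<in> o(\<lambda>T. T)"
  shows "\<exists>c::real.
     ((\<lambda>N::nat. real (card {d \<in> {1..N}. squarefree (fpoly (int d))}) / real N)
        \<longlonglongrightarrow> c)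
     \<and> c > 0
     \<and> ((\<lambda>x::nat. \<Prod>p\<in>{p. prime p \<and> p \<le> x}.
            1 - real (delta_f fpoly (p ^ 2)) / real (p ^ 2)) \<longlonglongrightarrow> c)"
proof -
  obtain c where c: "Pr \<longlonglongrightarrow> c" "c > 0" "\<forall>x. c \<le> Pr x" using Pr_conv by blast
  have "(\<lambda>N. real (card (Aset N)) / real N) \<longlonglongrightarrow> c" by (rule main_limit[OF assms c(1,3)])
  then have L1: "(\<lambda>N::nat. real (card {d \<in> {1..N}. squarefree (fpoly (int d))}) / real N) \<longlonglongrightarrow> c"
    unfolding Aset_def .
  have L2: "(\<lambda>x::nat. \<Prod>p\<in>{p. prime p \<and> p \<le> x}. 1 - real (delta_f fpoly (p ^ 2)) / real (p ^ 2)) \<longlonglongrightarrow> c"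
    using c(1) unfolding Pr_def PS_def .
  show ?thesis by (intro exI[of _ c] conjI L1 L2 c(2))
qed

end
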